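(* Let $\overline{\mathcal R}(D)$ be defined exactly as $\mathcal R_{Y-X-Z}(D)$ except that the joint distribution is allowed to be of the form $p(x,y,z,u,w)=p(x,y)p(z|x)p(u|y)p(w|x,u,y)$. Then $\overline{\mathcal R}(D)=\mathcal R_{Y-X-Z}(D)$.
   Context: Let $\mathcal X,\mathcal Y,\mathcal Z,\hat{\mathcal X}$ be finite alphabets, $d:\mathcal X\times\hat{\mathcal X}\to[0,\infty)$ a distortion measure, and $(X,Y,Z)\sim p(x,y)p(z|x)$. $\mathcal R_{Y-X-Z}(D)$ is the set of all pairs $(R,R_1)$ with $R_1\ge I(U;Y|Z)$ and $R\ge I(X;W|U,Z)$ for some finite-alphabet random variables $U,W$ with joint distribution $p(x,y,z,u,w)=p(x,y)p(z|x)p(u|y)p(w|x,u)$ and a deterministic function $\hat X(U,W,Z)$ with $\mathbb E\, d(X,\hat X(U,W,Z))\le D$. *)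

theory Defs
  imports "HOL-Probability.Probability"
begin

definition cond_mutual_info :: "('a \<times> 'b \<times> 'c) pmf \<Rightarrow> real" where
  "cond_mutual_info P =
     (\<Sum>(a,b,c)\<in>set_pmf P.
        pmf P (a,b,c) *
        log 2 (pmf P (a,b,c) * pmf (map_pmf (\<lambda>(a,b,c). c) P) c /
               (pmf (map_pmf (\<lambda>(a,b,c). (a,c)) P) (a,c) *
                pmf (map_pmf (\<lambda>(a,b,c). (b,c)) P) (b,c))))"

text \<open>Joint distribution p(x,y)p(z|x)p(u|y)p(w|x,u,y) of (X,Y,Z,U,W).
  Auxiliary alphabets are encoded in nat (with finite support required below).\<close>
definition joint_dist ::
  "('x \<times> 'y) pmf \<Rightarrow> ('x \<Rightarrow> 'z pmf) \<Rightarrow> ('y \<Rightarrow> nat pmf) \<Rightarrow> ('x \<Rightarrow> nat \<Rightarrow> 'y \<Rightarrow> nat pmf)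
    \<Rightarrow> ('x \<times> 'y \<times> 'z \<times> nat \<times> nat) pmf" where
  "joint_dist p q pu pw =
     bind_pmf p (\<lambda>(x,y). bind_pmf (q x) (\<lambda>z. bind_pmf (pu y) (\<lambda>u.
       map_pmf (\<lambda>w. (x,y,z,u,w)) (pw x u y))))"

definition achieves ::
  "('x \<times> 'y) pmf \<Rightarrow> ('x \<Rightarrow> 'z pmf) \<Rightarrow> ('x \<Rightarrow> 'xh \<Rightarrow> real) \<Rightarrow> real
    \<Rightarrow> ('y \<Rightarrow> nat pmf) \<Rightarrow> ('x \<Rightarrow> nat \<Rightarrow> 'y \<Rightarrow> nat pmf) \<Rightarrow> (nat \<Rightarrow> nat \<Rightarrow> 'z \<Rightarrow> 'xh)
    \<Rightarrow> real \<times> real \<Rightarrow> bool" where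
  "achieves p q d D pu pw xhat RR1 =
     (let J = joint_dist p q pu pw in
       finite (\<Union>y. set_pmf (pu y)) \<and>
       finite (\<Union>x. \<Union>u. \<Union>y. set_pmf (pw x u y)) \<and>
       measure_pmf.expectation J (\<lambda>(x,y,z,u,w). d x (xhat u w z)) \<le> D \<and>
       snd RR1 \<ge> cond_mutual_info (map_pmf (\<lambda>(x,y,z,u,w). (u,y,z)) J) \<and>
       fst RR1 \<ge> cond_mutual_info (map_pmf (\<lambda>(x,y,z,u,w). (x,w,(u,z))) J))"

definition region_YXZ ::
  "('x \<times> 'y) pmf \<Rightarrow> ('x \<Rightarrow> 'z pmf) \<Rightarrow> ('x \<Rightarrow> 'xh \<Rightarrow> real) \<Rightarrow> real \<Rightarrow> (real \<times> real) set" where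
  "region_YXZ p q d D =
     {RR1. \<exists>pu (pw :: 'x \<Rightarrow> nat \<Rightarrow> nat pmf) xhat.
              achieves p q d D pu (\<lambda>x u y. pw x u) xhat RR1}"

definition region_bar ::
  "('x \<times> 'y) pmf \<Rightarrow> ('x \<Rightarrow> 'z pmf) \<Rightarrow> ('x \<Rightarrow> 'xh \<Rightarrow> real) \<Rightarrow> real \<Rightarrow> (real \<times> real) set" where
  "region_bar p q d D = {RR1. \<exists>pu pw xhat. achieves p q d D pu pw xhat RR1}"

end

theory Submission imports Defs begin

definition Amk :: "('x \<times> 'y) pmf \<Rightarrow> ('y \<Rightarrow> nat pmf) \<Rightarrow> (('x \<times> nat) \<times> 'y) pmf" where
  "Amk p pu = bind_pmf p (\<lambda>(x,y). map_pmf (\<lambda>u. ((x,u),y)) (pu y))"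

lemma joint_rep:
  "map_pmf F (joint_dist p q pu pw) =
   bind_pmf (Amk p pu) (\<lambda>((x,u),y). bind_pmf (pw x u y) (\<lambda>w. map_pmf (\<lambda>z. F (x,y,z,u,w)) (q x)))"
  unfolding joint_dist_def Amk_def map_bind_pmf bind_assoc_pmf bind_map_pmf
  apply (rule bind_pmf_cong[OF refl])
  apply (clarsimp simp: map_pmf_def bind_assoc_pmf bind_return_pmf)
  apply (subst bind_commute_pmf)
  apply (rule bind_pmf_cong[OF refl])
  apply (subst bind_commute_pmf)
  apply simp
  done

definition Pbar :: "('a \<times> 'b) pmf \<Rightarrow> ('a \<Rightarrow> 'b \<Rightarrow> 'c pmf) \<Rightarrow> 'c \<Rightarrow> 'a \<Rightarrow> 'c pmf" where
  "Pbar A P c0 a = (if a \<in> set_pmf (map_pmf fst A)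
      then bind_pmf (cond_pmf A {t. fst t = a}) (\<lambda>(a',b). P a' b) else return_pmf c0)"

lemma disint_A: "bind_pmf (map_pmf fst A) (\<lambda>a. cond_pmf A {t. fst t = a}) = A"
  apply (rule bind_cond_pmf_cancel)
    apply auto
  apply (simp add: measure_map_pmf vimage_def)
  done

lemma disint:
  fixes A :: "('a \<times> 'b) pmf"
  shows "bind_pmf A (\<lambda>(a,b). bind_pmf (P a b) (k a)) = bind_pmf A (\<lambda>(a,b). bind_pmf (Pbar A P c0 a) (k a))"
proof -
  have "bind_pmf A (\<lambda>(a,b). bind_pmf (P a b) (k a)) =
     bind_pmf (map_pmf fst A) (\<lambda>a. bind_pmf (cond_pmf A {t. fst t = a}) (\<lambda>(a,b). bind_pmf (P a b) (k a)))"
    by (subst (1) disint_A[symmetric]) (simp add: bind_assoc_pmf)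
  also have "\<dots> = bind_pmf (map_pmf fst A) (\<lambda>a. bind_pmf (Pbar A P c0 a) (k a))"
  proof (rule bind_pmf_cong[OF refl])
    fix a assume a: "a \<in> set_pmf (map_pmf fst A)"
    have ne: "set_pmf A \<inter> {t. fst t = a} \<noteq> {}" using a by auto
    show "bind_pmf (cond_pmf A {t. fst t = a}) (\<lambda>(a,b). bind_pmf (P a b) (k a)) = bind_pmf (Pbar A P c0 a) (k a)"
      unfolding Pbar_def using a bind_assoc_pmf
      apply (simp add: bind_assoc_pmf)
      apply (rule bind_pmf_cong[OF refl])
      using ne by (auto simp: set_cond_pmf[OF ne])
  qed
  also have "\<dots> = bind_pmf A (\<lambda>(a,b). bind_pmf (Pbar A P c0 a) (k a))"
    by (simp add: bind_map_pmf case_prod_unfold)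
  finally show ?thesis .
qed

definition pwbar :: "('x \<times> 'y) pmf \<Rightarrow> ('y \<Rightarrow> nat pmf) \<Rightarrow> ('x \<Rightarrow> nat \<Rightarrow> 'y \<Rightarrow> nat pmf) \<Rightarrow> 'x \<Rightarrow> nat \<Rightarrow> nat pmf" where
  "pwbar p pu pw x u = Pbar (Amk p pu) (\<lambda>a y. pw (fst a) (snd a) y) 0 (x,u)"

lemma marg_eq:
  "map_pmf (\<lambda>(x,y,z,u,w). G (x,z,u,w)) (joint_dist p q pu pw) =
   map_pmf (\<lambda>(x,y,z,u,w). G (x,z,u,w)) (joint_dist p q pu (\<lambda>x u y. pwbar p pu pw x u))"
  unfolding joint_rep pwbar_def
  using disint[of "Amk p pu" "\<lambda>a y. pw (fst a) (snd a) y" "\<lambda>a w. map_pmf (\<lambda>z. G (fst a,z,snd a,w)) (q (fst a))" 0]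
  by (simp add: case_prod_unfold)

lemma marg_uyz:
  "map_pmf (\<lambda>(x,y,z,u,w). (u,y,z)) (joint_dist p q pu pw) =
   map_pmf (\<lambda>(x,y,z,u,w). (u,y,z)) (joint_dist p q pu pw')"
  unfolding joint_rep by simp

lemma set_pwbar: "set_pmf (pwbar p pu pw x u) \<subseteq> insert 0 (\<Union>x. \<Union>u. \<Union>y. set_pmf (pw x u y))"
  unfolding pwbar_def Pbar_def by auto

theorem lemma3:
  fixes p :: "('x::finite \<times> 'y::finite) pmf"
    and q :: "'x \<Rightarrow> 'z::finite pmf"
    and d :: "'x \<Rightarrow> 'xh::finite \<Rightarrow> real"
    and D :: real
  assumes "\<And>x xh. d x xh \<ge> 0"
  shows "region_bar p q d D = region_YXZ p q d D"
proof
  show "region_YXZ p q d D \<subseteq> region_bar p q d D"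
    unfolding region_YXZ_def region_bar_def by blast
next
  show "region_bar p q d D \<subseteq> region_YXZ p q d D"
  proof
    fix RR1 assume "RR1 \<in> region_bar p q d D"
    then obtain pu pw xhat where a: "achieves p q d D pu pw xhat RR1"
      unfolding region_bar_def by blast
    define pw' where "pw' = pwbar p pu pw"
    let ?J = "joint_dist p q pu pw"
    let ?J' = "joint_dist p q pu (\<lambda>x u y. pw' x u)"
    have E: "measure_pmf.expectation J (\<lambda>(x,y,z,u,w). d x (xhat u w z)) =
       measure_pmf.expectation (map_pmf (\<lambda>(x,y,z,u,w). (x,z,u,w)) J) (\<lambda>(x,z,u,w). d x (xhat u w z))"
      for J :: "('x \<times> 'y \<times> 'z \<times> nat \<times> nat) pmf"
      by (simp add: case_prod_unfold)
    have M1: "map_pmf (\<lambda>(x,y,z,u,w). (x,z,u,w)) ?J = map_pmf (\<lambda>(x,y,z,u,w). (x,z,u,w)) ?J'"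
      unfolding pw'_def using marg_eq[of "\<lambda>t. t" p q pu pw] by simp
    have M2: "map_pmf (\<lambda>(x,y,z,u,w). (x,w,(u,z))) ?J = map_pmf (\<lambda>(x,y,z,u,w). (x,w,(u,z))) ?J'"
      unfolding pw'_def using marg_eq[of "\<lambda>(x,z,u,w). (x,w,(u,z))" p q pu pw] by simp
    have M3: "map_pmf (\<lambda>(x,y,z,u,w). (u,y,z)) ?J = map_pmf (\<lambda>(x,y,z,u,w). (u,y,z)) ?J'"
      by (rule marg_uyz)
    have fin: "finite (\<Union>x. \<Union>u. \<Union>y. set_pmf (pw x u y))"
      using a unfolding achieves_def Let_def by blast
    have fin': "finite (\<Union>x. \<Union>u. \<Union>y::'y. set_pmf (pw' x u))"
      by (rule finite_subset[OF _ finite_insert[THEN iffD2, OF fin]])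
         (use set_pwbar[of p pu pw] in \<open>auto simp: pw'_def\<close>)
    have "achieves p q d D pu (\<lambda>x u y. pw' x u) xhat RR1"
      using a fin' unfolding achieves_def Let_def
      by (simp only: E[of ?J] E[of ?J'] M1 M2 M3)
    then show "RR1 \<in> region_YXZ p q d D"
      unfolding region_YXZ_def by blast
  qed
qed

end
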